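(* Let $d_n^B(x;1/2)$ be defined by $\sum_{n\ge0}d_n^B(x;1/2)\frac{z^n}{n!}=\left(\frac{(1-x)e^{z/2}}{e^{xz}-xe^{z}}\right)^{2}$. For $n\geq1$, $$d_n^B(x;1/2)=\frac{1}{x}d_{n+1}(x)+d_n(x),$$ and $$d_n^B(x;1/2)=\sum_{\pi\in\mathfrak{S}_{n+1}^s}x^{\mathrm{asc}(\pi)}.$$
   Context: $d_n(x)=\sum_{\pi}x^{\mathrm{exc}(\pi)}$ is the classical derangement polynomial, the sum over permutations $\pi\in\mathfrak{S}_n$ with no fixed points, where $\mathrm{exc}(\pi)=\#\{i:\pi(i)>i\}$ (with $d_0(x)=1$). For $\pi\in\mathfrak{S}_n$, an ascent is $i\in[n-1]$ with $\pi(i)<\pi(i+1)$, $\mathrm{asc}(\pi)$ is the number of ascents, and a succession is $i\in[n-1]$ with $\pi(i+1)=\pi(i)+1$; $\mathfrak{S}_n^s$ is the set of permutations in $\mathfrak{S}_n$ with no successions. *)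

theory Defs
  imports "HOL-Combinatorics.Combinatorics" "HOL-Computational_Algebra.Formal_Power_Series"
begin

text \<open>Permutations of [n] = {1..n} are functions permuting {1..n} (identity outside).\<close>

definition exc :: "nat \<Rightarrow> (nat \<Rightarrow> nat) \<Rightarrow> nat" where
  "exc n p = card {i \<in> {1..n}. p i > i}"

definition asc :: "nat \<Rightarrow> (nat \<Rightarrow> nat) \<Rightarrow> nat" where
  "asc n p = card {i \<in> {1..<n}. p i < p (i + 1)}"

definition no_succession :: "nat \<Rightarrow> (nat \<Rightarrow> nat) \<Rightarrow> bool" where
  "no_succession n p \<longleftrightarrow> (\<forall>i \<in> {1..<n}. p (i + 1) \<noteq> p i + 1)"

definition derangement_poly :: "nat \<Rightarrow> real \<Rightarrow> real" where
  "derangement_poly n x =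
     (\<Sum>p \<in> {p. p permutes {1..n} \<and> (\<forall>i \<in> {1..n}. p i \<noteq> i)}. x ^ exc n p)"

text \<open>d_n^B(x;1/2) via its exponential generating function in z, for fixed real x \<noteq> 1.\<close>
definition dB_half :: "nat \<Rightarrow> real \<Rightarrow> real" where
  "dB_half n x = fact n * fps_nth
     ((fps_const (1 - x) * fps_exp (1/2) / (fps_exp x - fps_const x * fps_exp 1)) ^ 2) n"

end

theory Submission
  imports Defs
begin


definition fixc :: "nat \<Rightarrow> (nat \<Rightarrow> nat) \<Rightarrow> nat" where
  "fixc n p = card {i \<in> {1..n}. p i = i}"
definition succc :: "nat \<Rightarrow> (nat \<Rightarrow> nat) \<Rightarrow> nat" where
  "succc n p = card {i \<in> {1..<n}. p (i + 1) = p i + 1}"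
definition SS :: "nat \<Rightarrow> (nat \<Rightarrow> nat) set" where
  "SS n = {p. p permutes {1..n}}"
definition PP :: "nat \<Rightarrow> (nat \<Rightarrow> nat \<Rightarrow> real) \<Rightarrow> real" where
  "PP n G = (\<Sum>p\<in>SS n. G (exc n p) (fixc n p))"

lemma finite_SS[simp]: "finite (SS n)"
  unfolding SS_def by (simp add: finite_permutations)

lemma sum_three_classes:
  fixes a b c :: real
  assumes "finite U" "A \<subseteq> U" "F \<subseteq> U" "A \<inter> F = {}"
  shows "(\<Sum>i\<in>U. if i \<in> A then a else if i \<in> F then b else c)
       = real (card A) * a + real (card F) * b + (real (card U) - real (card A) - real (card F)) * c"
proof -
  have fA: "finite A" and fF: "finite F" using assms by (auto intro: finite_subset)
  have "(\<Sum>i\<in>U. if i \<in> A then a else if i \<in> F then b else c)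
      = (\<Sum>i\<in>A. a) + (\<Sum>i\<in>U - A. if i \<in> F then b else c)"
    using assms by (subst sum.subset_diff[of A U]) (auto intro!: sum.cong)
  also have "(\<Sum>i\<in>U - A. if i \<in> F then b else c) = (\<Sum>i\<in>F. b) + (\<Sum>i\<in>U - A - F. c)"
    using assms by (subst sum.subset_diff[of F "U - A"]) (auto intro!: sum.cong)
  also have "card (U - A - F) = card U - card A - card F"
  proof -
    have "U - A - F = U - (A \<union> F)" by auto
    moreover have "card (A \<union> F) = card A + card F" using fA fF assms(4) by (rule card_Un_disjoint)
    moreover have "card (U - (A \<union> F)) = card U - card (A \<union> F)"
      using assms fA fF by (intro card_Diff_subset) auto
    ultimately show ?thesis by simp
  qed
  moreover have "card A + card F \<le> card U"
    using assms fA fF by (metis card_Un_disjoint card_mono Un_least)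
  ultimately show ?thesis by (simp add: of_nat_diff algebra_simps)
qed

lemma perm_insert_sets:
  assumes q: "q permutes {1..n}" and b: "b \<in> {1..n}"
  shows "{i\<in>{1..Suc n}. (transpose (Suc n) b \<circ> q) i > i} = insert (inv q b) ({i\<in>{1..n}. q i > i} - {inv q b})"
    and "{i\<in>{1..Suc n}. (transpose (Suc n) b \<circ> q) i = i} = {i\<in>{1..n}. q i = i} - {inv q b}"
proof -
  have qi0: "q (inv q b) = b" using q by (simp add: permutes_inverses(1))
  have i0: "inv q b \<in> {1..n}" using q b by (metis permutes_inv permutes_in_image)
  have qm: "q (Suc n) = Suc n" using q by (intro permutes_not_in) auto
  have qin: "q i \<in> {1..n}" if "i \<in> {1..n}" for i using permutes_in_image[OF q, of i] that by simp
  have qeq: "q i = b \<longleftrightarrow> i = inv q b" if "i \<in> {1..n}" for i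
    using q qi0 by (metis permutes_inverses(2))
  show "{i\<in>{1..Suc n}. (transpose (Suc n) b \<circ> q) i > i} = insert (inv q b) ({i\<in>{1..n}. q i > i} - {inv q b})"
  proof (intro set_eqI iffI)
    fix i assume "i \<in> {i\<in>{1..Suc n}. (transpose (Suc n) b \<circ> q) i > i}"
    then show "i \<in> insert (inv q b) ({i\<in>{1..n}. q i > i} - {inv q b})"
      using qm qin qeq b by (cases "i = Suc n") (auto simp: transpose_def less_Suc_eq_le split: if_splits)
  next
    fix i assume "i \<in> insert (inv q b) ({i\<in>{1..n}. q i > i} - {inv q b})"
    then show "i \<in> {i\<in>{1..Suc n}. (transpose (Suc n) b \<circ> q) i > i}"
      using qm qin qeq b i0 qi0 by (auto simp: transpose_def less_Suc_eq_le) (metis Suc_n_not_le_n atLeastAtMost_iff)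
  qed
  show "{i\<in>{1..Suc n}. (transpose (Suc n) b \<circ> q) i = i} = {i\<in>{1..n}. q i = i} - {inv q b}"
  proof (intro set_eqI iffI)
    fix i assume "i \<in> {i\<in>{1..Suc n}. (transpose (Suc n) b \<circ> q) i = i}"
    then show "i \<in> {i\<in>{1..n}. q i = i} - {inv q b}"
      using qm qin qeq b qi0 apply (cases "i = Suc n") apply (auto simp: transpose_def less_Suc_eq_le split: if_splits)
      apply (metis Suc_n_not_le_n atLeastAtMost_iff)+ done
  next
    fix i assume "i \<in> {i\<in>{1..n}. q i = i} - {inv q b}"
    then show "i \<in> {i\<in>{1..Suc n}. (transpose (Suc n) b \<circ> q) i = i}"
      using qm qin qeq b i0 qi0 by (auto simp: transpose_def less_Suc_eq_le)
  qed
qed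

lemma P_inner:
  fixes G :: "nat \<Rightarrow> nat \<Rightarrow> real"
  assumes q: "q permutes {1..n}"
  shows "(\<Sum>b\<in>insert (Suc n) {1..n}. G (exc (Suc n) (transpose (Suc n) b \<circ> q)) (fixc (Suc n) (transpose (Suc n) b \<circ> q)))
    = G (exc n q) (fixc n q + 1) + fixc n q * G (exc n q + 1) (fixc n q - 1) + exc n q * G (exc n q) (fixc n q)
      + (real n - exc n q - fixc n q) * G (exc n q + 1) (fixc n q)"
proof -
  define A where "A = {i\<in>{1..n}. q i > i}"
  define F where "F = {i\<in>{1..n}. q i = i}"
  have qm: "q (Suc n) = Suc n" using q by (intro permutes_not_in) auto
  have e: "exc n q = card A" by (simp add: exc_def A_def)
  have f: "fixc n q = card F" by (simp add: fixc_def F_def)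
  have e1: "exc (Suc n) q = card A"
    unfolding exc_def A_def using qm by (intro arg_cong[where f=card]) (auto simp: le_Suc_eq)
  have f1: "fixc (Suc n) q = card F + 1"
  proof -
    have "{i \<in> {1..Suc n}. q i = i} = insert (Suc n) F" using qm by (auto simp: F_def)
    then show ?thesis by (simp add: fixc_def F_def)
  qed
  have fin: "finite A" "finite F" by (auto simp: A_def F_def)
  have "(\<Sum>b\<in>{1..n}. G (exc (Suc n) (transpose (Suc n) b \<circ> q)) (fixc (Suc n) (transpose (Suc n) b \<circ> q)))
      = (\<Sum>b\<in>{1..n}. G (card (insert (inv q b) (A - {inv q b}))) (card (F - {inv q b})))"
  proof (intro sum.cong refl)
    fix b assume b: "b \<in> {1..n}"
    show "G (exc (Suc n) (transpose (Suc n) b \<circ> q)) (fixc (Suc n) (transpose (Suc n) b \<circ> q)) = G (card (insert (inv q b) (A - {inv q b}))) (card (F - {inv q b}))"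
      unfolding exc_def fixc_def perm_insert_sets[OF q b] A_def F_def ..
  qed
  also have "\<dots> = (\<Sum>i\<in>{1..n}. G (card (insert i (A - {i}))) (card (F - {i})))"
  proof -
    have bij: "bij_betw q {1..n} {1..n}" using q by (rule permutes_imp_bij)
    show ?thesis
      using sum.reindex_bij_betw[OF bij, of "\<lambda>b. G (card (insert (inv q b) (A - {inv q b}))) (card (F - {inv q b}))"]
      by (simp add: permutes_inverses(2)[OF q])
  qed
  also have "\<dots> = (\<Sum>i\<in>{1..n}. if i \<in> A then G (card A) (card F) else if i \<in> F then G (card A + 1) (card F - 1)
                    else G (card A + 1) (card F))"
  proof (intro sum.cong refl)
    fix i assume i: "i \<in> {1..n}"
    have AF: "i \<in> A \<Longrightarrow> i \<notin> F" by (auto simp: A_def F_def)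
    show "G (card (insert i (A - {i}))) (card (F - {i})) = (if i \<in> A then G (card A) (card F) else if i \<in> F then G (card A + 1) (card F - 1)
                    else G (card A + 1) (card F))"
      using fin AF by (auto simp: card_insert_if insert_absorb card_Diff_singleton_if)
  qed
  also have "\<dots> = card A * G (card A) (card F) + card F * G (card A + 1) (card F - 1) + (real n - card A - card F) * G (card A + 1) (card F)"
    by (subst sum_three_classes) (auto simp: A_def F_def)
  finally have *: "(\<Sum>b\<in>{1..n}. G (exc (Suc n) (transpose (Suc n) b \<circ> q)) (fixc (Suc n) (transpose (Suc n) b \<circ> q)))
     = card A * G (card A) (card F) + card F * G (card A + 1) (card F - 1) + (real n - card A - card F) * G (card A + 1) (card F)" .
  show ?thesis
    apply (subst sum.insert)
      apply simp
     apply simp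
    apply (subst *)
    apply (simp add: e f e1 f1 algebra_simps)
    done
qed

lemma PP_rec:
  fixes G :: "nat \<Rightarrow> nat \<Rightarrow> real"
  shows "PP (Suc n) G = PP n (\<lambda>e f. G e (f + 1) + f * G (e + 1) (f - 1) + e * G e f + (real n - e - f) * G (e + 1) f)"
proof -
  have "PP (Suc n) G = (\<Sum>b\<in>insert (Suc n) {1..n}. \<Sum>q\<in>SS n. G (exc (Suc n) (transpose (Suc n) b \<circ> q)) (fixc (Suc n) (transpose (Suc n) b \<circ> q)))"
  proof -
    have e: "{1..Suc n} = insert (Suc n) {1..n}" by auto
    show ?thesis unfolding PP_def SS_def e
      by (rule sum_over_permutations_insert) auto
  qed
  also have "\<dots> = (\<Sum>q\<in>SS n. \<Sum>b\<in>insert (Suc n) {1..n}. G (exc (Suc n) (transpose (Suc n) b \<circ> q)) (fixc (Suc n) (transpose (Suc n) b \<circ> q)))"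
    by (rule sum.swap)
  also have "\<dots> = PP n (\<lambda>e f. G e (f + 1) + f * G (e + 1) (f - 1) + e * G e f + (real n - e - f) * G (e + 1) f)"
    unfolding PP_def by (intro sum.cong refl, rule P_inner) (simp add: SS_def)
  finally show ?thesis .
qed



definition ins :: "nat \<Rightarrow> nat \<Rightarrow> nat \<Rightarrow> nat" where
  "ins n j i = (if i < j \<or> i > Suc n then i else if i = j then Suc n else i - 1)"
definition insinv :: "nat \<Rightarrow> nat \<Rightarrow> nat \<Rightarrow> nat" where
  "insinv n j i = (if i < j \<or> i > Suc n then i else if i = Suc n then j else i + 1)"

lemma ins_insinv: "j \<in> {1..Suc n} \<Longrightarrow> ins n j (insinv n j i) = i"
  by (auto simp: ins_def insinv_def)
lemma insinv_ins: "j \<in> {1..Suc n} \<Longrightarrow> insinv n j (ins n j i) = i"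
  by (auto simp: ins_def insinv_def)

lemma ins_permutes: assumes "j \<in> {1..Suc n}" shows "ins n j permutes {1..Suc n}"
  unfolding permutes_def
proof (intro conjI allI impI)
  fix x assume "x \<notin> {1..Suc n}" then show "ins n j x = x" using assms by (auto simp: ins_def)
next
  fix y show "\<exists>!x. ins n j x = y"
    using ins_insinv[OF assms] insinv_ins[OF assms] by metis
qed

lemma insinv_permutes: assumes "j \<in> {1..Suc n}" shows "insinv n j permutes {1..Suc n}"
  unfolding permutes_def
proof (intro conjI allI impI)
  fix x assume "x \<notin> {1..Suc n}" then show "insinv n j x = x" using assms by (auto simp: insinv_def)
next
  fix y show "\<exists>!x. insinv n j x = y"
    using ins_insinv[OF assms] insinv_ins[OF assms] by metis
qed

lemma ins_j: "j \<in> {1..Suc n} \<Longrightarrow> ins n j j = Suc n"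
  by (auto simp: ins_def)

lemma SS_Suc_image: "SS (Suc n) = (\<lambda>(p, j). p \<circ> ins n j) ` (SS n \<times> {1..Suc n})"
proof (intro set_eqI iffI)
  fix s assume s: "s \<in> SS (Suc n)"
  then have sp: "s permutes {1..Suc n}" by (simp add: SS_def)
  define j where "j = inv s (Suc n)"
  have j: "j \<in> {1..Suc n}" unfolding j_def using permutes_in_image[OF permutes_inv[OF sp], of "Suc n"] by simp
  have sj: "s j = Suc n" unfolding j_def using sp by (simp add: permutes_inverses(1))
  define p where "p = s \<circ> insinv n j"
  have pp: "p permutes {1..Suc n}" unfolding p_def using sp insinv_permutes[OF j] by (rule permutes_compose[rotated])
  have pm: "p (Suc n) = Suc n" unfolding p_def using sj j by (simp add: insinv_def)
  have "p permutes {1..n}"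
    using pp by (rule permutes_superset) (use pm in \<open>auto simp: le_Suc_eq\<close>)
  moreover have "p \<circ> ins n j = s"
    unfolding p_def using insinv_ins[OF j] by (auto simp: fun_eq_iff)
  ultimately show "s \<in> (\<lambda>(p, j). p \<circ> ins n j) ` (SS n \<times> {1..Suc n})"
    using j by (force simp: SS_def)
next
  fix s assume "s \<in> (\<lambda>(p, j). p \<circ> ins n j) ` (SS n \<times> {1..Suc n})"
  then obtain p j where p: "p permutes {1..n}" and j: "j \<in> {1..Suc n}" and s: "s = p \<circ> ins n j"
    by (auto simp: SS_def)
  have "p permutes {1..Suc n}" using p by (rule permutes_subset) auto
  then show "s \<in> SS (Suc n)" unfolding s SS_def using ins_permutes[OF j] by (simp add: permutes_compose)
qed

lemma SS_Suc_inj: "inj_on (\<lambda>(p, j). p \<circ> ins n j) (SS n \<times> {1..Suc n})"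
proof (rule inj_onI, clarify)
  fix p j p' j'
  assume p: "p \<in> SS n" and j: "j \<in> {1..Suc n}" and p': "p' \<in> SS n" and j': "j' \<in> {1..Suc n}"
    and eq: "p \<circ> ins n j = p' \<circ> ins n j'"
  have pp: "p permutes {1..n}" and pp': "p' permutes {1..n}" using p p' by (auto simp: SS_def)
  have pm: "p (Suc n) = Suc n" "p' (Suc n) = Suc n" using pp pp' by (auto intro: permutes_not_in)
  have "(p \<circ> ins n j') j' = Suc n" using pm ins_j[OF j'] by simp
  then have "(p \<circ> ins n j) j' = Suc n" using eq pm ins_j[OF j'] by simp
  moreover have "(p \<circ> ins n j) j = Suc n" using pm ins_j[OF j] by simp
  moreover have "inj (p \<circ> ins n j)"
    using pp ins_permutes[OF j] by (meson inj_compose permutes_inj)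
  ultimately have jj: "j = j'" by (metis injD)
  have "p = p'"
  proof
    fix x
    have "p (ins n j (insinv n j x)) = p' (ins n j (insinv n j x))" using eq jj by (metis comp_apply)
    then show "p x = p' x" using ins_insinv[OF j] by simp
  qed
  then show "p = p' \<and> j = j'" using jj by simp
qed

lemma sum_SS_Suc:
  "(\<Sum>s\<in>SS (Suc n). F s) = (\<Sum>p\<in>SS n. \<Sum>j\<in>{1..Suc n}. F (p \<circ> ins n j))"
proof -
  have "(\<Sum>s\<in>SS (Suc n). F s) = (\<Sum>x\<in>SS n \<times> {1..Suc n}. F ((\<lambda>(p, j). p \<circ> ins n j) x))"
    unfolding SS_Suc_image by (subst sum.reindex[OF SS_Suc_inj]) (simp add: case_prod_beta)
  also have "\<dots> = (\<Sum>p\<in>SS n. \<Sum>j\<in>{1..Suc n}. F (p \<circ> ins n j))"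
    using sum.cartesian_product[of "\<lambda>p j. F (p \<circ> ins n j)" "{1..Suc n}" "SS n"]
    by (simp add: case_prod_beta)
  finally show ?thesis .
qed



definition cntR :: "nat \<Rightarrow> (nat \<Rightarrow> nat) \<Rightarrow> (nat \<Rightarrow> nat \<Rightarrow> bool) \<Rightarrow> nat" where
  "cntR m p R = card {i\<in>{1..<m}. R (p i) (p (i + 1))}"

lemma asc_cntR: "asc m p = cntR m p (<)" by (simp add: asc_def cntR_def)
lemma succc_cntR: "succc m p = cntR m p (\<lambda>a b. b = a + 1)" by (simp add: succc_def cntR_def)

lemma ins_cnt:
  assumes pm: "p (Suc n) = Suc n" and j: "j \<in> {1..Suc n}"
  shows "cntR (Suc n) (p \<circ> ins n j) R + (if 2 \<le> j \<and> j \<le> n \<and> R (p (j - 1)) (p j) then 1 else 0)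
       = cntR n p R + (if 2 \<le> j \<and> R (p (j - 1)) (Suc n) then 1 else 0) + (if j \<le> n \<and> R (Suc n) (p j) then 1 else 0)"
proof -
  define X1 where "X1 = {i\<in>{1..<n}. i + 1 < j \<and> R (p i) (p (i + 1))}"
  define X2 where "X2 = {i. 2 \<le> j \<and> i = j - 1 \<and> R (p (j - 1)) (Suc n)}"
  define X3 where "X3 = {i. j \<le> n \<and> i = j \<and> R (Suc n) (p j)}"
  define Y4 where "Y4 = {k\<in>{1..<n}. j \<le> k \<and> R (p k) (p (k + 1))}"
  define X4 where "X4 = {i\<in>{1..<Suc n}. j < i \<and> R (p (i - 1)) (p i)}"
  define Y2 where "Y2 = {i. 2 \<le> j \<and> j \<le> n \<and> i = j - 1 \<and> R (p (j - 1)) (p j)}"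
  have ins_lt: "ins n j i = i" if "i < j" for i using that by (simp add: ins_def)
  have ins_eq: "ins n j j = Suc n" using j by (simp add: ins_def)
  have ins_gt: "ins n j i = i - 1" if "j < i" "i \<le> Suc n" for i using that by (simp add: ins_def)
  have "{i\<in>{1..<Suc n}. R ((p \<circ> ins n j) i) ((p \<circ> ins n j) (i + 1))} = X1 \<union> X2 \<union> X3 \<union> X4"
  proof (intro set_eqI)
    fix i
    consider "i + 1 < j" | "i + 1 = j" | "i = j" | "j < i" by linarith
    then show "i \<in> {i\<in>{1..<Suc n}. R ((p \<circ> ins n j) i) ((p \<circ> ins n j) (i + 1))} \<longleftrightarrow> i \<in> X1 \<union> X2 \<union> X3 \<union> X4"
    proof cases
      case 1
      then have "i \<notin> X2" "i \<notin> X3" "i \<notin> X4" by (auto simp: X2_def X3_def X4_def)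
      moreover have "i < Suc n \<longleftrightarrow> i < n" using 1 j by auto
      ultimately show ?thesis using 1 by (simp add: ins_lt X1_def)
    next
      case 2
      then have "i \<notin> X1" "i \<notin> X3" "i \<notin> X4" by (auto simp: X1_def X3_def X4_def)
      moreover have "i = j - 1" "i < Suc n" using 2 j by auto
      ultimately show ?thesis using 2 pm by (auto simp: ins_lt ins_eq X2_def)
    next
      case 3
      then have "i \<notin> X1" "i \<notin> X2" "i \<notin> X4" by (auto simp: X1_def X2_def X4_def)
      then show ?thesis using 3 j pm by (auto simp: ins_gt ins_eq X3_def)
    next
      case 4
      then have "i \<notin> X1" "i \<notin> X2" "i \<notin> X3" by (auto simp: X1_def X2_def X3_def)
      moreover have "(p \<circ> ins n j) (i + 1) = p i" if "i < Suc n"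
        using 4 that ins_gt[of "i+1"] by simp
      moreover have "(p \<circ> ins n j) i = p (i - 1)" if "i < Suc n"
        using 4 that ins_gt[of i] by simp
      ultimately show ?thesis using 4 by (auto simp: X4_def)
    qed
  qed
  moreover have "{i\<in>{1..<n}. R (p i) (p (i + 1))} = X1 \<union> Y2 \<union> Y4"
  proof (intro set_eqI)
    fix i
    consider "i + 1 < j" | "i + 1 = j" | "j \<le> i" by linarith
    then show "i \<in> {i\<in>{1..<n}. R (p i) (p (i + 1))} \<longleftrightarrow> i \<in> X1 \<union> Y2 \<union> Y4"
    proof cases
      case 2
      then have "i = j - 1" "j = i + 1" by auto
      then show ?thesis using 2 by (auto simp: X1_def Y2_def Y4_def)
    qed (auto simp: X1_def Y2_def Y4_def)
  qed
  moreover have "card X4 = card Y4"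
  proof -
    have "X4 = Suc ` Y4"
    proof (intro set_eqI iffI)
      fix i assume i: "i \<in> X4"
      then have "i = Suc (i - 1)" "i - 1 \<in> Y4" using j by (auto simp: X4_def Y4_def)
      then show "i \<in> Suc ` Y4" by (metis image_eqI)
    qed (auto simp: X4_def Y4_def)
    then show ?thesis by (simp add: card_image)
  qed
  moreover have "card X2 = (if 2 \<le> j \<and> R (p (j - 1)) (Suc n) then 1 else 0)" by (simp add: X2_def)
  moreover have "card X3 = (if j \<le> n \<and> R (Suc n) (p j) then 1 else 0)" by (simp add: X3_def)
  moreover have "card Y2 = (if 2 \<le> j \<and> j \<le> n \<and> R (p (j - 1)) (p j) then 1 else 0)" by (simp add: Y2_def)
  moreover have "card (X1 \<union> X2 \<union> X3 \<union> X4) = card X1 + card X2 + card X3 + card X4"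
  proof -
    have f: "finite X1" "finite X2" "finite X3" "finite X4" by (auto simp: X1_def X2_def X3_def X4_def)
    have d1: "X1 \<inter> X2 = {}" "X1 \<inter> X3 = {}" "X1 \<inter> X4 = {}" "X2 \<inter> X3 = {}" "X2 \<inter> X4 = {}" "X3 \<inter> X4 = {}"
      by (auto simp: X1_def X2_def X3_def X4_def)
    have "card (X1 \<union> X2 \<union> X3 \<union> X4) = card (X1 \<union> X2 \<union> X3) + card X4"
      by (rule card_Un_disjoint) (use f d1 in auto)
    moreover have "card (X1 \<union> X2 \<union> X3) = card (X1 \<union> X2) + card X3"
      by (rule card_Un_disjoint) (use f d1 in auto)
    moreover have "card (X1 \<union> X2) = card X1 + card X2"
      by (rule card_Un_disjoint) (use f d1 in auto)
    ultimately show ?thesis by simp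
  qed
  moreover have "card (X1 \<union> Y2 \<union> Y4) = card X1 + card Y2 + card Y4"
  proof -
    have f: "finite X1" "finite Y2" "finite Y4" by (auto simp: X1_def Y2_def Y4_def)
    have d1: "X1 \<inter> Y2 = {}" "X1 \<inter> Y4 = {}" "Y2 \<inter> Y4 = {}"
      by (auto simp: X1_def Y2_def Y4_def)
    have "card (X1 \<union> Y2 \<union> Y4) = card (X1 \<union> Y2) + card Y4"
      by (rule card_Un_disjoint) (use f d1 in auto)
    moreover have "card (X1 \<union> Y2) = card X1 + card Y2"
      by (rule card_Un_disjoint) (use f d1 in auto)
    ultimately show ?thesis by simp
  qed
  ultimately show ?thesis unfolding cntR_def by simp
qed

lemma sum_four_classes:
  fixes c a b d :: real
  assumes "finite U" "C \<subseteq> A" "A \<subseteq> U" "B \<subseteq> U" "A \<inter> B = {}"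
  shows "(\<Sum>i\<in>U. if i \<in> C then c else if i \<in> A then a else if i \<in> B then b else d)
       = real (card C) * c + (real (card A) - real (card C)) * a + real (card B) * b
         + (real (card U) - real (card A) - real (card B)) * d"
proof -
  have fA: "finite A" "finite B" "finite C" using assms by (auto intro: finite_subset)
  have "(\<Sum>i\<in>U. if i \<in> C then c else if i \<in> A then a else if i \<in> B then b else d)
      = (\<Sum>i\<in>A. if i \<in> C then c else if i \<in> {} then 0 else a) + (\<Sum>i\<in>U - A. if i \<in> B then b else if i \<in> {} then 0 else d)"
  proof -
    have "(\<Sum>i\<in>U. if i \<in> C then c else if i \<in> A then a else if i \<in> B then b else d)
      = (\<Sum>i\<in>U - A. if i \<in> C then c else if i \<in> A then a else if i \<in> B then b else d)
        + (\<Sum>i\<in>A. if i \<in> C then c else if i \<in> A then a else if i \<in> B then b else d)"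
      using assms by (intro sum.subset_diff) auto
    also have "(\<Sum>i\<in>U - A. if i \<in> C then c else if i \<in> A then a else if i \<in> B then b else d)
       = (\<Sum>i\<in>U - A. if i \<in> B then b else if i \<in> {} then 0 else d)"
      using assms by (intro sum.cong) auto
    also have "(\<Sum>i\<in>A. if i \<in> C then c else if i \<in> A then a else if i \<in> B then b else d)
       = (\<Sum>i\<in>A. if i \<in> C then c else if i \<in> {} then 0 else a)"
      by (intro sum.cong) auto
    finally show ?thesis by simp
  qed
  also have "(\<Sum>i\<in>A. if i \<in> C then c else if i \<in> {} then 0 else a) = real (card C) * c + (real (card A) - real (card C)) * a"
    using assms fA by (subst sum_three_classes) auto
  also have "(\<Sum>i\<in>U - A. if i \<in> B then b else if i \<in> {} then 0 else d) = real (card B) * b + (real (card (U - A)) - real (card B)) * d"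
    using assms fA by (subst sum_three_classes) auto
  also have "card (U - A) = card U - card A" using assms fA by (simp add: card_Diff_subset)
  moreover have "card A \<le> card U" using assms by (simp add: card_mono)
  ultimately show ?thesis by (simp add: of_nat_diff algebra_simps)
qed

definition QQ :: "nat \<Rightarrow> (nat \<Rightarrow> nat \<Rightarrow> real) \<Rightarrow> real" where
  "QQ n G = (\<Sum>p\<in>SS n. G (asc n p) (succc n p))"

lemma Q_inner:
  fixes G :: "nat \<Rightarrow> nat \<Rightarrow> real"
  assumes q: "q permutes {1..n}" and n: "n \<ge> 1"
  shows "(\<Sum>j\<in>{1..Suc n}. G (asc (Suc n) (q \<circ> ins n j)) (succc (Suc n) (q \<circ> ins n j)))
    = (1 + real (asc n q) - real (succc n q)) * G (asc n q) (succc n q)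
      + real (succc n q) * G (asc n q) (succc n q - 1)
      + (real n - 1 - real (asc n q)) * G (asc n q + 1) (succc n q)
      + G (asc n q + 1) (succc n q + 1)"
proof -
  define a where "a = asc n q"
  define s where "s = succc n q"
  define Aset where "Aset = {k\<in>{1..n}. k < n \<and> q k < q (k + 1)}"
  define Cset where "Cset = {k\<in>{1..n}. k < n \<and> q (k + 1) = q k + 1}"
  define Bset where "Bset = {k\<in>{1..n}. q k = n}"
  have qm: "q (Suc n) = Suc n" using q by (intro permutes_not_in) auto
  have qin: "q i \<in> {1..n}" if "i \<in> {1..n}" for i using permutes_in_image[OF q, of i] that by simp
  have cA: "card Aset = a" unfolding a_def asc_def Aset_def by (rule arg_cong[where f=card]) auto
  have cC: "card Cset = s" unfolding s_def succc_def Cset_def by (rule arg_cong[where f=card]) auto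
  have cB: "card Bset = 1"
  proof -
    have "Bset = {inv q n}"
    proof (intro set_eqI iffI)
      fix k assume "k \<in> Bset" then show "k \<in> {inv q n}" using q by (auto simp: Bset_def permutes_inverses(2)[OF q, symmetric])
    next
      fix k assume "k \<in> {inv q n}"
      then show "k \<in> Bset" using q n permutes_in_image[OF permutes_inv[OF q], of n]
        by (auto simp: Bset_def permutes_inverses(1)[OF q])
    qed
    then show ?thesis by simp
  qed
  have CA: "Cset \<subseteq> Aset" by (auto simp: Cset_def Aset_def)
  have AB: "Aset \<inter> Bset = {}"
  proof -
    { fix k assume k: "k \<in> Aset" "k \<in> Bset"
      then have "k + 1 \<in> {1..n}" by (auto simp: Aset_def)
      then have "q (k + 1) \<le> n" using qin by auto
      with k have False by (auto simp: Aset_def Bset_def) }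
    then show ?thesis by auto
  qed
  have CB: "k \<notin> Bset" if "k \<in> Cset" for k using that CA AB by auto
  have j1: "asc (Suc n) (q \<circ> ins n 1) = a" "succc (Suc n) (q \<circ> ins n 1) = s"
  proof -
    have "q 1 \<le> n" using qin n by auto
    then show "asc (Suc n) (q \<circ> ins n 1) = a" "succc (Suc n) (q \<circ> ins n 1) = s"
      using ins_cnt[of q n 1 "(<)", OF qm] ins_cnt[of q n 1 "\<lambda>a b. b = a + 1", OF qm]
      by (auto simp: a_def s_def asc_cntR succc_cntR)
  qed
  have jk: "asc (Suc n) (q \<circ> ins n (Suc k)) = (if k \<in> Aset then a else a + 1)"
           "succc (Suc n) (q \<circ> ins n (Suc k)) = (if k \<in> Cset then s - 1 else if k \<in> Bset then s + 1 else s)"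
    if k: "k \<in> {1..n}" for k
  proof -
    have qk: "q k \<le> n" using qin k by auto
    have qk1: "k + 1 \<le> n \<Longrightarrow> q (k + 1) \<le> n" using qin k by auto
    have kj: "Suc k \<in> {1..Suc n}" using k by auto
    show "asc (Suc n) (q \<circ> ins n (Suc k)) = (if k \<in> Aset then a else a + 1)"
      using ins_cnt[of q n "Suc k" "(<)", OF qm kj] k qk qk1
      by (auto simp: a_def asc_cntR Aset_def split: if_splits)
    show "succc (Suc n) (q \<circ> ins n (Suc k)) = (if k \<in> Cset then s - 1 else if k \<in> Bset then s + 1 else s)"
      using ins_cnt[of q n "Suc k" "\<lambda>a b. b = a + 1", OF qm kj] k qk qk1
      by (auto simp: s_def succc_cntR Cset_def Bset_def split: if_splits)
  qed
  have split: "{1..Suc n} = insert 1 (Suc ` {1..n})"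
    by (auto simp: image_iff)
  have "(\<Sum>j\<in>{1..Suc n}. G (asc (Suc n) (q \<circ> ins n j)) (succc (Suc n) (q \<circ> ins n j)))
     = G a s + (\<Sum>k\<in>{1..n}. G (asc (Suc n) (q \<circ> ins n (Suc k))) (succc (Suc n) (q \<circ> ins n (Suc k))))"
  proof -
    let ?h = "\<lambda>j. G (asc (Suc n) (q \<circ> ins n j)) (succc (Suc n) (q \<circ> ins n j))"
    have "sum ?h {1..Suc n} = sum ?h (insert 1 (Suc ` {1..n}))" by (simp only: split)
    also have "\<dots> = ?h 1 + sum ?h (Suc ` {1..n})" by (rule sum.insert) auto
    also have "sum ?h (Suc ` {1..n}) = sum (?h \<circ> Suc) {1..n}" by (rule sum.reindex) simp
    also have "sum (?h \<circ> Suc) {1..n} = (\<Sum>k\<in>{1..n}. ?h (Suc k))" by (rule sum.cong) simp_all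
    finally show ?thesis by (simp only: j1)
  qed
  also have "(\<Sum>k\<in>{1..n}. G (asc (Suc n) (q \<circ> ins n (Suc k))) (succc (Suc n) (q \<circ> ins n (Suc k))))
     = (\<Sum>k\<in>{1..n}. if k \<in> Cset then G a (s - 1) else if k \<in> Aset then G a s else if k \<in> Bset then G (a + 1) (s + 1) else G (a + 1) s)"
    using AB by (intro sum.cong refl) (auto simp: jk CB dest: subsetD[OF CA])
  also have "\<dots> = real (card Cset) * G a (s - 1) + (real (card Aset) - real (card Cset)) * G a s + real (card Bset) * G (a + 1) (s + 1)
         + (real (card {1..n}) - real (card Aset) - real (card Bset)) * G (a + 1) s"
    by (rule sum_four_classes) (use CA AB in \<open>auto simp: Aset_def Bset_def\<close>)
  finally have X: "(\<Sum>j\<in>{1..Suc n}. G (asc (Suc n) (q \<circ> ins n j)) (succc (Suc n) (q \<circ> ins n j))) = G a s + (real (card Cset) * G a (s - 1) + (real (card Aset) - real (card Cset)) * G a s + real (card Bset) * G (a + 1) (s + 1)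
         + (real (card {1..n}) - real (card Aset) - real (card Bset)) * G (a + 1) s)" .
  show ?thesis unfolding X by (simp add: cA cB cC a_def s_def algebra_simps)
qed

lemma QQ_rec:
  fixes G :: "nat \<Rightarrow> nat \<Rightarrow> real"
  assumes n: "n \<ge> 1"
  shows "QQ (Suc n) G = QQ n (\<lambda>a s. (1 + real a - real s) * G a s + real s * G a (s - 1)
      + (real n - 1 - real a) * G (a + 1) s + G (a + 1) (s + 1))"
  unfolding QQ_def sum_SS_Suc by (intro sum.cong refl, rule Q_inner) (use n in \<open>auto simp: SS_def\<close>)



definition Dr :: "nat \<Rightarrow> (nat \<Rightarrow> real) \<Rightarrow> real" where
  "Dr k g = PP k (\<lambda>e f. if f = 0 then g e else 0)"

lemma SS_0: "SS 0 = {id}" by (auto simp: SS_def)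
lemma SS_1: "SS 1 = {id}" by (auto simp: SS_def)

lemma PP_0: "PP 0 G = G 0 0" by (simp add: PP_def SS_0 exc_def fixc_def)
lemma Dr_0: "Dr 0 g = g 0" by (simp add: Dr_def PP_0)

lemma PP_add: "PP n (\<lambda>e f. G1 e f + G2 e f) = PP n G1 + PP n G2"
  by (simp add: PP_def sum.distrib)
lemma PP_mult: "PP n (\<lambda>e f. c * G e f) = c * PP n G"
  by (simp add: PP_def sum_distrib_left)
lemma Dr_add: "Dr n (\<lambda>e. g1 e + g2 e) = Dr n g1 + Dr n g2"
  unfolding Dr_def PP_add[symmetric] by (rule arg_cong[where f="PP n"]) (simp add: fun_eq_iff)
lemma Dr_mult: "Dr n (\<lambda>e. c * g e) = c * Dr n g"
  unfolding Dr_def PP_mult[symmetric] by (rule arg_cong[where f="PP n"]) (simp add: fun_eq_iff)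
lemma Dr_zero: "Dr n (\<lambda>e. 0) = 0"
  using Dr_mult[of n 0 "\<lambda>e. 0"] by simp
lemma Dr_if: "Dr n (\<lambda>e. if c then g e else 0) = (if c then Dr n g else 0)"
  by (cases c) (simp_all add: Dr_zero)

definition Cprop :: "nat \<Rightarrow> bool" where
  "Cprop m \<longleftrightarrow> (\<forall>G. PP m G = (\<Sum>k\<le>m. real (m choose k) * Dr k (\<lambda>e. G e (m - k))))"

lemma Cprop_0: "Cprop 0" by (simp add: Cprop_def PP_0 Dr_0)

lemma RD_from:
  assumes C: "Cprop k"
  shows "Dr (Suc k) g = Dr k (\<lambda>e. real e * g e + (real k - real e) * g (e + 1)) + real k * Dr (k - 1) (\<lambda>e. g (e + 1))"
proof -
  have "Dr (Suc k) g = PP k (\<lambda>e f. (if f = 1 then g (e + 1) else 0) + (if f = 0 then real e * g e + (real k - real e) * g (e + 1) else 0))"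
    unfolding Dr_def PP_rec
    by (rule arg_cong[where f="PP k"]) (auto simp: fun_eq_iff)
  also have "\<dots> = PP k (\<lambda>e f. if f = 1 then g (e + 1) else 0) + Dr k (\<lambda>e. real e * g e + (real k - real e) * g (e + 1))"
    unfolding Dr_def by (rule PP_add)
  also have "PP k (\<lambda>e f. if f = 1 then g (e + 1) else 0) = real k * Dr (k - 1) (\<lambda>e. g (e + 1))"
  proof -
    have "PP k (\<lambda>e f. if f = 1 then g (e + 1) else 0) = (\<Sum>i\<le>k. real (k choose i) * Dr i (\<lambda>e. if k - i = 1 then g (e + 1) else 0))"
      using C by (simp add: Cprop_def)
    also have "\<dots> = (\<Sum>i\<le>k. if i = k - 1 \<and> 1 \<le> k then real (k choose i) * Dr i (\<lambda>e. g (e + 1)) else 0)"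
      by (intro sum.cong refl) (auto simp: Dr_if Dr_zero)
    also have "\<dots> = (if 1 \<le> k then real (k choose (k - 1)) * Dr (k - 1) (\<lambda>e. g (e + 1)) else 0)"
      by (cases "1 \<le> k") (simp_all add: sum.delta')
    also have "\<dots> = real k * Dr (k - 1) (\<lambda>e. g (e + 1))"
      by (cases k) simp_all
    finally show ?thesis .
  qed
  finally show ?thesis by linarith
qed

lemma binom_coeff: "real (n choose Suc k) * real (Suc k) = real (n choose k) * (real n - real k)"
proof -
  have "Suc k * (n choose Suc k) = (n - k) * (n choose k)"
    using binomial_absorption[of k n] binomial_absorb_comp[of n k] by simp
  then have "real (Suc k * (n choose Suc k)) = real ((n - k) * (n choose k))" by simp
  moreover have "real (n - k) * real (n choose k) = real (n choose k) * (real n - real k)"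
    by (cases "k \<le> n") (auto simp: of_nat_diff)
  ultimately show ?thesis by (simp only: of_nat_mult) (simp add: algebra_simps)
qed

lemma Cprop_step:
  assumes IH: "\<And>k. k \<le> n \<Longrightarrow> Cprop k"
  shows "Cprop (Suc n)"
  unfolding Cprop_def
proof
  fix G :: "nat \<Rightarrow> nat \<Rightarrow> real"
  define S1 where "S1 = (\<Sum>k\<le>n. real (n choose k) * Dr k (\<lambda>e. G e (Suc n - k)))"
  define S2 where "S2 = (\<Sum>k\<le>n. real (n choose k) * ((real n - real k) * Dr k (\<lambda>e. G (e + 1) (n - k - 1))))"
  define S3 where "S3 = (\<Sum>k\<le>n. real (n choose k) * Dr k (\<lambda>e. real e * G e (n - k) + (real k - real e) * G (e + 1) (n - k)))"
  define S4 where "S4 = (\<Sum>k\<le>n. real (n choose k) * (real k * Dr (k - 1) (\<lambda>e. G (e + 1) (n - k))))"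
  have "PP (Suc n) G = PP n (\<lambda>e f. G e (f + 1) + f * G (e + 1) (f - 1) + e * G e f + (real n - e - f) * G (e + 1) f)"
    by (rule PP_rec)
  also have "\<dots> = (\<Sum>k\<le>n. real (n choose k) * Dr k (\<lambda>e. G e (n - k + 1) + real (n - k) * G (e + 1) (n - k - 1) + e * G e (n - k) + (real n - e - real (n - k)) * G (e + 1) (n - k)))"
    using IH[of n] by (simp add: Cprop_def)
  also have "\<dots> = S1 + S2 + S3"
  proof -
    have "Dr k (\<lambda>e. G e (n - k + 1) + real (n - k) * G (e + 1) (n - k - 1) + e * G e (n - k) + (real n - e - real (n - k)) * G (e + 1) (n - k))
       = Dr k (\<lambda>e. G e (Suc n - k)) + (real n - real k) * Dr k (\<lambda>e. G (e + 1) (n - k - 1))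
         + Dr k (\<lambda>e. real e * G e (n - k) + (real k - real e) * G (e + 1) (n - k))" if k: "k \<le> n" for k
    proof -
      have "(\<lambda>e. G e (n - k + 1) + real (n - k) * G (e + 1) (n - k - 1) + e * G e (n - k) + (real n - e - real (n - k)) * G (e + 1) (n - k))
        = (\<lambda>e. G e (Suc n - k) + ((real n - real k) * G (e + 1) (n - k - 1) + (real e * G e (n - k) + (real k - real e) * G (e + 1) (n - k))))"
        using k by (auto simp: fun_eq_iff of_nat_diff Suc_diff_le algebra_simps)
      then show ?thesis by (simp add: Dr_add Dr_mult add.assoc)
    qed
    then show ?thesis unfolding S1_def S2_def S3_def
      by (simp add: sum.distrib[symmetric] distrib_left)
  qed
  also have "S1 + S2 + S3 = (\<Sum>k\<le>Suc n. real (Suc n choose k) * Dr k (\<lambda>e. G e (Suc n - k)))"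
  proof -
    have A: "S1 = Dr 0 (\<lambda>e. G e (Suc n)) + (\<Sum>k\<le>n. real (n choose Suc k) * Dr (Suc k) (\<lambda>e. G e (n - k)))"
    proof -
      have "S1 = (\<Sum>k\<le>Suc n. real (n choose k) * Dr k (\<lambda>e. G e (Suc n - k)))"
        unfolding S1_def by simp
      also have "\<dots> = Dr 0 (\<lambda>e. G e (Suc n)) + (\<Sum>k\<le>n. real (n choose Suc k) * Dr (Suc k) (\<lambda>e. G e (n - k)))"
        by (subst sum.atMost_Suc_shift) simp
      finally show ?thesis .
    qed
    have B: "(\<Sum>k\<le>n. real (n choose k) * Dr (Suc k) (\<lambda>e. G e (n - k))) = S3 + S4"
    proof -
      have "Dr (Suc k) (\<lambda>e. G e (n - k)) = Dr k (\<lambda>e. real e * G e (n - k) + (real k - real e) * G (e + 1) (n - k))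
             + real k * Dr (k - 1) (\<lambda>e. G (e + 1) (n - k))" if "k \<le> n" for k
        using RD_from[OF IH[OF that]] by simp
      then show ?thesis unfolding S3_def S4_def
        by (simp add: sum.distrib[symmetric] distrib_left)
    qed
    have C: "S4 = S2"
    proof (cases n)
      case 0 then show ?thesis by (simp add: S2_def S4_def)
    next
      case (Suc n')
      have "S4 = (\<Sum>k\<le>n'. real (n choose Suc k) * (real (Suc k) * Dr k (\<lambda>e. G (e + 1) (n - Suc k))))"
        unfolding S4_def Suc by (subst sum.atMost_Suc_shift) simp
      also have "\<dots> = (\<Sum>k\<le>n'. real (n choose k) * ((real n - real k) * Dr k (\<lambda>e. G (e + 1) (n - k - 1))))"
        by (intro sum.cong refl) (simp only: mult.assoc[symmetric] binom_coeff, simp)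
      also have "\<dots> = S2" unfolding S2_def Suc by simp
      finally show ?thesis .
    qed
    have D: "(\<Sum>k\<le>Suc n. real (Suc n choose k) * Dr k (\<lambda>e. G e (Suc n - k)))
       = Dr 0 (\<lambda>e. G e (Suc n)) + (\<Sum>k\<le>n. real (n choose Suc k) * Dr (Suc k) (\<lambda>e. G e (n - k)))
         + (\<Sum>k\<le>n. real (n choose k) * Dr (Suc k) (\<lambda>e. G e (n - k)))"
      by (subst sum.atMost_Suc_shift) (simp add: sum.distrib distrib_right)
    show ?thesis using A B C D by simp
  qed
  finally show "PP (Suc n) G = (\<Sum>k\<le>Suc n. real (Suc n choose k) * Dr k (\<lambda>e. G e (Suc n - k)))" .
qed

lemma Cprop_all: "Cprop m"
proof (induction m rule: less_induct)
  case (less m)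
  show ?case
  proof (cases m)
    case 0 then show ?thesis by (simp add: Cprop_0)
  next
    case (Suc n) show ?thesis unfolding Suc by (rule Cprop_step) (use less Suc in auto)
  qed
qed

lemma RD: "Dr (Suc k) g = Dr k (\<lambda>e. real e * g e + (real k - real e) * g (e + 1)) + real k * Dr (k - 1) (\<lambda>e. g (e + 1))"
  by (rule RD_from[OF Cprop_all])

lemma PP_decomp: "PP m G = (\<Sum>k\<le>m. real (m choose k) * Dr k (\<lambda>e. G e (m - k)))"
  using Cprop_all[of m] by (simp add: Cprop_def)



definition Sn :: "nat \<Rightarrow> (nat \<Rightarrow> real) \<Rightarrow> real" where
  "Sn k g = QQ k (\<lambda>a s. if s = 0 then g a else 0)"

lemma SS_Suc0: "SS (Suc 0) = {id}" by (auto simp: SS_def)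
lemma QQ_1: "QQ (Suc 0) G = G 0 0" by (simp add: QQ_def SS_Suc0 asc_def succc_def)
lemma Sn_1: "Sn (Suc 0) g = g 0" by (simp add: Sn_def QQ_1)

lemma QQ_add: "QQ n (\<lambda>e f. G1 e f + G2 e f) = QQ n G1 + QQ n G2"
  by (simp add: QQ_def sum.distrib)
lemma QQ_mult: "QQ n (\<lambda>e f. c * G e f) = c * QQ n G"
  by (simp add: QQ_def sum_distrib_left)
lemma Sn_add: "Sn n (\<lambda>e. g1 e + g2 e) = Sn n g1 + Sn n g2"
  unfolding Sn_def QQ_add[symmetric] by (rule arg_cong[where f="QQ n"]) (simp add: fun_eq_iff)
lemma Sn_mult: "Sn n (\<lambda>e. c * g e) = c * Sn n g"
  unfolding Sn_def QQ_mult[symmetric] by (rule arg_cong[where f="QQ n"]) (simp add: fun_eq_iff)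
lemma Sn_zero: "Sn n (\<lambda>e. 0) = 0"
  using Sn_mult[of n 0 "\<lambda>e. 0"] by simp
lemma Sn_if: "Sn n (\<lambda>e. if c then g e else 0) = (if c then Sn n g else 0)"
  by (cases c) (simp_all add: Sn_zero)

definition Kprop :: "nat \<Rightarrow> bool" where
  "Kprop n \<longleftrightarrow> (\<forall>G. QQ (Suc n) G = (\<Sum>j\<le>n. real (n choose j) * Sn (Suc n - j) (\<lambda>a. G (a + j) j)))"

lemma Kprop_0: "Kprop 0" by (simp add: Kprop_def QQ_1 Sn_1)

lemma RS_from:
  assumes K: "Kprop (k - 1)" and k: "k \<ge> 1"
  shows "Sn (Suc k) g = Sn k (\<lambda>a. (1 + real a) * g a + (real k - 1 - real a) * g (a + 1)) + (real k - 1) * Sn (k - 1) (\<lambda>a. g (a + 1))"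
proof -
  have "Sn (Suc k) g = QQ k (\<lambda>a s. (if s = 1 then g a else 0) + (if s = 0 then (1 + real a) * g a + (real k - 1 - real a) * g (a + 1) else 0))"
    unfolding Sn_def QQ_rec[OF k]
    by (rule arg_cong[where f="QQ k"]) (auto simp: fun_eq_iff)
  also have "\<dots> = QQ k (\<lambda>a s. if s = 1 then g a else 0) + Sn k (\<lambda>a. (1 + real a) * g a + (real k - 1 - real a) * g (a + 1))"
    unfolding Sn_def by (rule QQ_add)
  also have "QQ k (\<lambda>a s. if s = 1 then g a else 0) = (real k - 1) * Sn (k - 1) (\<lambda>a. g (a + 1))"
  proof -
    obtain k' where k': "k = Suc k'" using k by (cases k) auto
    have "QQ k (\<lambda>a s. if s = 1 then g a else 0) = (\<Sum>j\<le>k'. real (k' choose j) * Sn (Suc k' - j) (\<lambda>a. if j = 1 then g (a + j) else 0))"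
      using K by (simp add: Kprop_def k')
    also have "\<dots> = (\<Sum>j\<le>k'. if j = 1 then real (k' choose j) * Sn (Suc k' - j) (\<lambda>a. g (a + 1)) else 0)"
      by (intro sum.cong refl) (auto simp: Sn_if Sn_zero)
    also have "\<dots> = (if 1 \<le> k' then real (k' choose 1) * Sn k' (\<lambda>a. g (a + 1)) else 0)"
      by (cases "1 \<le> k'") (simp_all add: sum.delta')
    also have "\<dots> = (real k - 1) * Sn (k - 1) (\<lambda>a. g (a + 1))"
      by (cases k') (simp_all add: k')
    finally show ?thesis .
  qed
  finally show ?thesis by linarith
qed

lemma Kprop_step:
  assumes IH: "\<And>k. k \<le> n \<Longrightarrow> Kprop k"
  shows "Kprop (Suc n)"
  unfolding Kprop_def
proof
  fix G :: "nat \<Rightarrow> nat \<Rightarrow> real"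
  define L1 where "L1 = (\<Sum>j\<le>n. real (n choose j) * Sn (Suc n - j) (\<lambda>a. (1 + real a) * G (a + j) j + (real n - real j - real a) * G (a + j + 1) j))"
  define L2 where "L2 = (\<Sum>j\<le>n. real (n choose j) * (real j * Sn (Suc n - j) (\<lambda>a. G (a + j) (j - 1))))"
  define L3 where "L3 = (\<Sum>j\<le>n. real (n choose j) * Sn (Suc n - j) (\<lambda>a. G (a + Suc j) (Suc j)))"
  define M where "M = (\<Sum>j\<le>n. real (n choose j) * ((real n - real j) * Sn (n - j) (\<lambda>a. G (a + 1 + j) j)))"
  have "QQ (Suc (Suc n)) G = QQ (Suc n) (\<lambda>a s. (1 + real a - real s) * G a s + real s * G a (s - 1)
      + (real (Suc n) - 1 - real a) * G (a + 1) s + G (a + 1) (s + 1))"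
    by (rule QQ_rec) simp
  also have "\<dots> = (\<Sum>j\<le>n. real (n choose j) * Sn (Suc n - j) (\<lambda>a. (1 + real (a + j) - real j) * G (a + j) j + real j * G (a + j) (j - 1)
      + (real (Suc n) - 1 - real (a + j)) * G (a + j + 1) j + G (a + j + 1) (j + 1)))"
    using IH[of n] by (simp add: Kprop_def)
  also have "\<dots> = L1 + L2 + L3"
  proof -
    have "Sn (Suc n - j) (\<lambda>a. (1 + real (a + j) - real j) * G (a + j) j + real j * G (a + j) (j - 1)
      + (real (Suc n) - 1 - real (a + j)) * G (a + j + 1) j + G (a + j + 1) (j + 1))
      = Sn (Suc n - j) (\<lambda>a. (1 + real a) * G (a + j) j + (real n - real j - real a) * G (a + j + 1) j)
        + real j * Sn (Suc n - j) (\<lambda>a. G (a + j) (j - 1)) + Sn (Suc n - j) (\<lambda>a. G (a + Suc j) (Suc j))" for j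
    proof -
      have "(\<lambda>a. (1 + real (a + j) - real j) * G (a + j) j + real j * G (a + j) (j - 1)
        + (real (Suc n) - 1 - real (a + j)) * G (a + j + 1) j + G (a + j + 1) (j + 1))
        = (\<lambda>a. ((1 + real a) * G (a + j) j + (real n - real j - real a) * G (a + j + 1) j)
            + (real j * G (a + j) (j - 1) + G (a + Suc j) (Suc j)))"
        by (auto simp: fun_eq_iff algebra_simps)
      then show ?thesis by (simp add: Sn_add Sn_mult add.assoc)
    qed
    then show ?thesis unfolding L1_def L2_def L3_def
      by (simp add: sum.distrib[symmetric] distrib_left)
  qed
  also have "L1 + L2 + L3 = (\<Sum>j\<le>Suc n. real (Suc n choose j) * Sn (Suc (Suc n) - j) (\<lambda>a. G (a + j) j))"
  proof -
    have A: "L1 = (\<Sum>j\<le>n. real (n choose j) * Sn (Suc (Suc n) - j) (\<lambda>a. G (a + j) j)) - M"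
    proof -
      have "Sn (Suc n - j) (\<lambda>a. (1 + real a) * G (a + j) j + (real n - real j - real a) * G (a + j + 1) j)
         = Sn (Suc (Suc n) - j) (\<lambda>a. G (a + j) j) - (real n - real j) * Sn (n - j) (\<lambda>a. G (a + 1 + j) j)"
        if j: "j \<le> n" for j
      proof -
        have k: "Suc n - j \<ge> 1" using j by simp
        have K: "Kprop (Suc n - j - 1)" using IH j by simp
        have e1: "Suc (Suc n - j) = Suc (Suc n) - j" using j by simp
        have e2: "real (Suc n - j) - 1 = real n - real j" using j by (simp add: of_nat_diff)
        have e3: "Suc n - j - 1 = n - j" by simp
        show ?thesis
          using RS_from[OF K k, of "\<lambda>a. G (a + j) j"] unfolding e1 e2 e3
          by (simp add: algebra_simps)
      qed
      then show ?thesis unfolding L1_def M_def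
        by (simp add: sum_subtractf[symmetric] right_diff_distrib)
    qed
    have A2: "(\<Sum>j\<le>n. real (n choose j) * Sn (Suc (Suc n) - j) (\<lambda>a. G (a + j) j))
       = Sn (Suc (Suc n)) (\<lambda>a. G a 0) + (\<Sum>j\<le>n. real (n choose Suc j) * Sn (Suc n - j) (\<lambda>a. G (a + Suc j) (Suc j)))"
    proof -
      have "(\<Sum>j\<le>n. real (n choose j) * Sn (Suc (Suc n) - j) (\<lambda>a. G (a + j) j))
          = (\<Sum>j\<le>Suc n. real (n choose j) * Sn (Suc (Suc n) - j) (\<lambda>a. G (a + j) j))"
        by simp
      also have "\<dots> = Sn (Suc (Suc n)) (\<lambda>a. G a 0) + (\<Sum>j\<le>n. real (n choose Suc j) * Sn (Suc n - j) (\<lambda>a. G (a + Suc j) (Suc j)))"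
        by (subst sum.atMost_Suc_shift) simp
      finally show ?thesis .
    qed
    have C: "L2 = M"
    proof (cases n)
      case 0 then show ?thesis by (simp add: L2_def M_def)
    next
      case (Suc n')
      have "L2 = (\<Sum>i\<le>n'. real (n choose Suc i) * (real (Suc i) * Sn (n - i) (\<lambda>a. G (a + Suc i) i)))"
        unfolding L2_def Suc by (subst sum.atMost_Suc_shift) simp
      also have "\<dots> = (\<Sum>i\<le>n'. real (n choose i) * ((real n - real i) * Sn (n - i) (\<lambda>a. G (a + 1 + i) i)))"
        by (intro sum.cong refl) (simp only: mult.assoc[symmetric] binom_coeff, simp add: add.commute)
      also have "\<dots> = M" unfolding M_def Suc by simp
      finally show ?thesis .
    qed
    have D: "(\<Sum>j\<le>Suc n. real (Suc n choose j) * Sn (Suc (Suc n) - j) (\<lambda>a. G (a + j) j))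
       = Sn (Suc (Suc n)) (\<lambda>a. G a 0) + (\<Sum>j\<le>n. real (n choose Suc j) * Sn (Suc n - j) (\<lambda>a. G (a + Suc j) (Suc j)))
         + L3"
      unfolding L3_def by (subst sum.atMost_Suc_shift) (simp add: sum.distrib distrib_right)
    show ?thesis using A A2 C D by simp
  qed
  finally show "QQ (Suc (Suc n)) G = (\<Sum>j\<le>Suc n. real (Suc n choose j) * Sn (Suc (Suc n) - j) (\<lambda>a. G (a + j) j))" .
qed

lemma Kprop_all: "Kprop m"
proof (induction m rule: less_induct)
  case (less m)
  show ?case
  proof (cases m)
    case 0 then show ?thesis by (simp add: Kprop_0)
  next
    case (Suc n) show ?thesis unfolding Suc by (rule Kprop_step) (use less Suc in auto)
  qed
qed

lemma RS: "k \<ge> 1 \<Longrightarrow> Sn (Suc k) g = Sn k (\<lambda>a. (1 + real a) * g a + (real k - 1 - real a) * g (a + 1)) + (real k - 1) * Sn (k - 1) (\<lambda>a. g (a + 1))"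
  by (rule RS_from[OF Kprop_all])



lemma Dr_1: "Dr (Suc 0) g = 0"
  using RD[of 0 g] by (simp add: Dr_0)

lemma Dr_cong1: "k \<ge> 1 \<Longrightarrow> (\<And>e. e \<ge> 1 \<Longrightarrow> g e = h e) \<Longrightarrow> Dr k g = Dr k h"
proof (induction k arbitrary: g h)
  case 0 then show ?case by simp
next
  case (Suc k)
  show ?case
  proof (cases "k = 0")
    case True then show ?thesis by (simp add: Dr_1)
  next
    case False
    have "Dr k (\<lambda>e. real e * g e + (real k - real e) * g (e + 1)) = Dr k (\<lambda>e. real e * h e + (real k - real e) * h (e + 1))"
      using False by (intro Suc.IH) (auto simp: Suc.prems)
    moreover have "(\<lambda>e. g (e + 1)) = (\<lambda>e. h (e + 1))" using Suc.prems by auto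
    ultimately show ?thesis by (simp only: RD)
  qed
qed

lemma Tprop: "m \<ge> 1 \<Longrightarrow> Sn m g = Dr m (\<lambda>e. g (e - 1)) + Dr (m - 1) g"
proof (induction m arbitrary: g rule: less_induct)
  case (less m)
  consider "m = 1" | "m = 2" | k where "m = Suc k" "k \<ge> 2" using less.prems
    by (metis One_nat_def Suc_1 le_SucE not_less_eq_eq numeral_2_eq_2 Suc_le_D nat_le_linear)
  then show ?case
  proof cases
    case 1 then show ?thesis by (simp add: Sn_1 Dr_1 Dr_0)
  next
    case 2
    have "Sn (Suc 1) g = g 0" using RS[of 1 g] by (simp add: Sn_1)
    moreover have "Dr (Suc 1) (\<lambda>e. g (e - 1)) = g 0" using RD[of 1 "\<lambda>e. g (e - 1)"] by (simp add: Dr_1 Dr_0)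
    ultimately show ?thesis using 2 by (simp add: Dr_1 numeral_2_eq_2)
  next
    case 3
    then obtain k' where k': "k = Suc k'" "k' \<ge> 1" by (cases k) auto
    define H where "H = (\<lambda>a. (1 + real a) * g a + (real k - 1 - real a) * g (a + 1))"
    define H' where "H' = (\<lambda>e. real e * g (e - 1) + (real k - real e) * g e)"
    have S1: "Sn (Suc k) g = Sn k H + (real k - 1) * Sn (k - 1) (\<lambda>a. g (a + 1))"
      unfolding H_def using 3 by (intro RS) auto
    have S2: "Sn k H = Dr k (\<lambda>e. H (e - 1)) + Dr (k - 1) H"
      using less.IH[of k H] 3 by simp
    have S3: "Sn (k - 1) (\<lambda>a. g (a + 1)) = Dr (k - 1) (\<lambda>e. g (e - 1 + 1)) + Dr (k - 2) (\<lambda>a. g (a + 1))"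
      using less.IH[of "k - 1" "\<lambda>a. g (a + 1)"] 3 by (simp add: diff_diff_left numeral_2_eq_2)
    have S4: "Dr k (\<lambda>e. H (e - 1)) = Dr k H'"
      using 3 by (intro Dr_cong1) (auto simp: H_def H'_def of_nat_diff algebra_simps)
    have S5: "Dr (k - 1) (\<lambda>e. g (e - 1 + 1)) = Dr (k - 1) g"
      using 3 by (intro Dr_cong1) auto
    have S6: "Dr (k - 1) H = Dr (k - 1) (\<lambda>e. real e * g e + (real (k - 1) - real e) * g (e + 1)) + Dr (k - 1) g"
    proof -
      have "H = (\<lambda>e. (real e * g e + (real (k - 1) - real e) * g (e + 1)) + g e)"
        using 3 by (auto simp: H_def fun_eq_iff of_nat_diff algebra_simps)
      then show ?thesis by (simp add: Dr_add)
    qed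
    have T1: "Dr (Suc k) (\<lambda>e. g (e - 1)) = Dr k H' + real k * Dr (k - 1) g"
      using RD[of k "\<lambda>e. g (e - 1)"] by (simp add: H'_def)
    have T2: "Dr k g = Dr (k - 1) (\<lambda>e. real e * g e + (real (k - 1) - real e) * g (e + 1)) + real (k - 1) * Dr (k - 2) (\<lambda>e. g (e + 1))"
      using RD[of "k - 1" g] k' by (simp add: diff_diff_left numeral_2_eq_2)
    have "real (k - 1) = real k - 1" using 3 by (simp add: of_nat_diff)
    then show ?thesis unfolding 3(1) using S1 S2 S3 S4 S5 S6 T1 T2 by (simp add: algebra_simps)
  qed
qed



lemma PP_inv: "PP (Suc n) (\<lambda>e f. g (e + f)) = PP (Suc n) (\<lambda>e f. g (e + 1))"
proof (induction n arbitrary: g)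
  case 0
  show ?case by (simp add: PP_rec PP_0)
next
  case (Suc n)
  define h where "h = (\<lambda>s. real s * g s + (real (Suc n) + 1 - real s) * g (s + 1))"
  have "PP (Suc (Suc n)) (\<lambda>e f. g (e + f)) = PP (Suc n) (\<lambda>e f. h (e + f))"
    unfolding PP_rec[of "Suc n"]
    by (rule arg_cong[where f="PP (Suc n)"]) (rule ext, rule ext, rename_tac e f, case_tac f, simp_all add: h_def algebra_simps)
  also have "\<dots> = PP (Suc n) (\<lambda>e f. h (e + 1))" by (rule Suc.IH)
  also have "\<dots> = PP (Suc (Suc n)) (\<lambda>e f. g (e + 1))"
    unfolding PP_rec[of "Suc n"]
    by (rule arg_cong[where f="PP (Suc n)"]) (auto simp: fun_eq_iff h_def algebra_simps)
  finally show ?case .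
qed

lemma binom_conv_identity:
  fixes x :: real
  assumes m: "m \<ge> 1"
  shows "(\<Sum>k\<le>m. real (m choose k) * Dr k (\<lambda>e. x ^ e) * x ^ (m - k)) = x * (\<Sum>k\<le>m. real (m choose k) * Dr k (\<lambda>e. x ^ e))"
proof -
  obtain n where n: "m = Suc n" using m by (cases m) auto
  have "PP m (\<lambda>e f. x ^ (e + f)) = (\<Sum>k\<le>m. real (m choose k) * Dr k (\<lambda>e. x ^ e) * x ^ (m - k))"
  proof -
    have X: "Dr k (\<lambda>e. x ^ (e + (m - k))) = x ^ (m - k) * Dr k (\<lambda>e. x ^ e)" for k
      using Dr_mult[of k "x ^ (m - k)" "\<lambda>e. x ^ e"] by (simp add: power_add mult.commute)
    show ?thesis unfolding PP_decomp by (intro sum.cong refl) (simp only: X mult_ac)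
  qed
  moreover have "PP m (\<lambda>e f. x ^ (e + 1)) = x * (\<Sum>k\<le>m. real (m choose k) * Dr k (\<lambda>e. x ^ e))"
  proof -
    have "Dr k (\<lambda>e. x ^ (e + 1)) = x * Dr k (\<lambda>e. x ^ e)" for k
      using Dr_mult[of k x "\<lambda>e. x ^ e"] by (simp add: mult.commute)
    then show ?thesis by (simp add: PP_decomp sum_distrib_left mult_ac)
  qed
  moreover have "PP m (\<lambda>e f. x ^ (e + f)) = PP m (\<lambda>e f. x ^ (e + 1))"
    unfolding n by (rule PP_inv)
  ultimately show ?thesis by simp
qed

definition Dser :: "real \<Rightarrow> real fps" where
  "Dser x = Abs_fps (\<lambda>k. Dr k (\<lambda>e. x ^ e) / fact k)"

lemma Dser_den: "Dser x * (fps_exp x - fps_const x * fps_exp 1) = fps_const (1 - x)"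
proof (rule fps_ext)
  fix m
  define d where "d k = Dr k (\<lambda>e. x ^ e)" for k
  have "fps_nth (Dser x * (fps_exp x - fps_const x * fps_exp 1)) m = (\<Sum>i=0..m. d i / fact i * ((x ^ (m - i) - x) / fact (m - i)))"
  proof -
    have den_nth: "fps_nth (fps_exp x - fps_const x * fps_exp 1) j = (x ^ j - x) / fact j" for j
      by (simp add: diff_divide_distrib)
    show ?thesis unfolding fps_mult_nth den_nth by (simp add: Dser_def d_def)
  qed
  also have "\<dots> = (\<Sum>i\<le>m. real (m choose i) * d i * (x ^ (m - i) - x)) / fact m"
    unfolding sum_divide_distrib atLeast0AtMost
  proof (intro sum.cong refl)
    fix i assume i: "i \<in> {..m}"
    then have "real (m choose i) = fact m / (fact i * fact (m - i))" by (simp add: binomial_fact)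
    then show "d i / fact i * ((x ^ (m - i) - x) / fact (m - i)) = real (m choose i) * d i * (x ^ (m - i) - x) / fact m"
      by (simp add: field_simps)
  qed
  also have "\<dots> = fps_nth (fps_const (1 - x)) m"
  proof (cases "m = 0")
    case True then show ?thesis by (simp add: d_def Dr_0)
  next
    case False
    then have "(\<Sum>i\<le>m. real (m choose i) * d i * (x ^ (m - i) - x)) = 0"
      using binom_conv_identity[of m x]
      by (simp add: d_def right_diff_distrib sum_subtractf sum_distrib_left mult_ac)
    then show ?thesis using False by simp
  qed
  finally show "fps_nth (Dser x * (fps_exp x - fps_const x * fps_exp 1)) m = fps_nth (fps_const (1 - x)) m" .
qed



lemma dp_Dr: "derangement_poly n x = Dr n (\<lambda>e. x ^ e)"
proof -
  have fin: "finite (SS n)" by simp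
  have "{p. p permutes {1..n} \<and> (\<forall>i \<in> {1..n}. p i \<noteq> i)} = {p \<in> SS n. fixc n p = 0}"
    by (auto simp: SS_def fixc_def)
  then have "derangement_poly n x = (\<Sum>p\<in>{p \<in> SS n. fixc n p = 0}. x ^ exc n p)"
    by (simp add: derangement_poly_def)
  also have "\<dots> = Dr n (\<lambda>e. x ^ e)"
    unfolding Dr_def PP_def by (rule sum.inter_filter[OF fin])
  finally show ?thesis .
qed

lemma target_Sn: "(\<Sum>p \<in> {p. p permutes {1..m} \<and> no_succession m p}. x ^ asc m p) = Sn m (\<lambda>a. (x::real) ^ a)"
proof -
  have fin: "finite (SS m)" by simp
  have "{p. p permutes {1..m} \<and> no_succession m p} = {p \<in> SS m. succc m p = 0}"
    by (auto simp: SS_def succc_def no_succession_def)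
  then have "(\<Sum>p \<in> {p. p permutes {1..m} \<and> no_succession m p}. x ^ asc m p) = (\<Sum>p\<in>{p \<in> SS m. succc m p = 0}. x ^ asc m p)"
    by simp
  also have "\<dots> = Sn m (\<lambda>a. x ^ a)"
    unfolding Sn_def QQ_def by (rule sum.inter_filter[OF fin])
  finally show ?thesis .
qed

lemma dB_main:
  fixes x :: real
  assumes x1: "x \<noteq> 1" and x0: "x \<noteq> 0"
  shows "dB_half n x = Dr (Suc n) (\<lambda>e. x ^ e) / x + Dr n (\<lambda>e. x ^ e)"
proof -
  define den where "den = fps_exp x - fps_const x * fps_exp (1::real)"
  define D where "D = Dser x"
  define X where "X = fps_const x"
  define I where "I = fps_const (1 / x)"
  define Ex where "Ex = fps_exp x"
  define E1 where "E1 = fps_exp (1::real)"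
  have den0: "fps_nth den 0 \<noteq> 0" using x1 by (simp add: den_def)
  have Dden: "D * den = fps_const (1 - x)" unfolding D_def den_def by (rule Dser_den)
  have c: "fps_const (1 - x) = 1 - X" unfolding X_def by (metis fps_const_1_eq_1 fps_const_sub)
  have h2: "D * (Ex - X * E1) = 1 - X" using Dden c by (simp add: den_def Ex_def E1_def X_def)
  have h3: "I * X = 1" using x0 by (simp add: I_def X_def fps_const_mult[symmetric])
  have h1: "fps_deriv D * (Ex - X * E1) = - (D * X * (Ex - E1))"
  proof -
    have "fps_deriv (D * den) = 0" using Dden by simp
    then have "D * fps_deriv den + fps_deriv D * den = 0" by simp
    moreover have "fps_deriv den = X * (Ex - E1)"
      by (simp add: den_def X_def Ex_def E1_def algebra_simps)
    ultimately show ?thesis unfolding den_def Ex_def E1_def X_def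
      by (simp add: algebra_simps eq_neg_iff_add_eq_0)
  qed
  have key0: "(I * fps_deriv D + D) * (Ex - X * E1) = (D * D * E1) * (Ex - X * E1)"
    using h1 h2 h3 by algebra
  have denne: "Ex - X * E1 \<noteq> 0" using den0 unfolding den_def Ex_def E1_def X_def by (metis fps_zero_nth)
  have key: "I * fps_deriv D + D = D * D * E1" using key0 denne by simp
  have sq: "(fps_const (1 - x) * fps_exp (1/2) / den) ^ 2 = D * D * E1"
  proof -
    have "fps_const (1 - x) * fps_exp (1/2) / den = fps_const (1 - x) * fps_exp (1/2) * inverse den"
      using den0 by (simp add: fps_divide_unit)
    also have "\<dots> = D * fps_exp (1/2) * (den * inverse den)"
      unfolding Dden[symmetric] by (simp only: mult_ac)
    also have "den * inverse den = 1" using den0 by (rule inverse_mult_eq_1')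
    finally have "fps_const (1 - x) * fps_exp (1/2) / den = D * fps_exp (1/2)" by simp
    moreover have "fps_exp (1/2) * fps_exp (1/2) = E1"
      unfolding E1_def fps_exp_add_mult[symmetric] by simp
    ultimately show ?thesis by (simp add: power2_eq_square mult_ac)
  qed
  have "dB_half n x = fact n * fps_nth (I * fps_deriv D + D) n"
    unfolding dB_half_def den_def[symmetric] sq key ..
  also have "\<dots> = Dr (Suc n) (\<lambda>e. x ^ e) / x + Dr n (\<lambda>e. x ^ e)"
  proof -
    define A where "A = Dr (Suc n) (\<lambda>e. x ^ e)"
    define B where "B = Dr n (\<lambda>e. x ^ e)"
    have "fps_nth (I * fps_deriv D + D) n = (1/x) * (real (Suc n) * (A / fact (Suc n))) + B / fact n"
      by (simp add: I_def D_def Dser_def A_def B_def)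
    moreover have "real (Suc n) * (A / fact (Suc n)) = A / fact n"
    proof -
      have f: "(fact (Suc n) :: real) = real (Suc n) * fact n" by simp
      show ?thesis unfolding f by (simp add: field_simps del: of_nat_Suc)
    qed
    ultimately have "fact n * fps_nth (I * fps_deriv D + D) n = fact n * ((1/x) * (A / fact n) + B / fact n)" by simp
    also have "\<dots> = A / x + B" by (simp add: field_simps)
    finally show ?thesis by (simp add: A_def B_def)
  qed
  finally show ?thesis .
qed

lemma dB_zero: "dB_half n 0 = 1"
proof -
  have "(fps_const (1 - 0) * fps_exp (1/2) / (fps_exp 0 - fps_const 0 * fps_exp 1)) ^ 2 = (fps_exp (1::real))"
    by (simp add: power2_eq_square fps_exp_add_mult[symmetric])
  then show ?thesis by (simp add: dB_half_def)
qed

lemma Dr_ind1: "k \<ge> 1 \<Longrightarrow> Dr (Suc k) (\<lambda>e. if e = 1 then 1 else 0) = 1"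
proof (induction k rule: dec_induct)
  case base
  show ?case using RD[of 1 "\<lambda>e. if e = 1 then 1 else 0"] by (simp add: Dr_1 Dr_0)
next
  case (step k)
  have a: "Dr (Suc k) (\<lambda>e. real e * (if e = 1 then 1 else 0) + (real (Suc k) - real e) * (if e + 1 = 1 then 1 else 0))
        = Dr (Suc k) (\<lambda>e. if e = 1 then 1 else 0)"
    by (intro Dr_cong1) auto
  have b: "Dr k (\<lambda>e. if e + 1 = 1 then 1 else 0) = 0"
  proof -
    have "Dr k (\<lambda>e. if e + 1 = 1 then 1 else 0) = Dr k (\<lambda>e. 0)"
      using step by (intro Dr_cong1) auto
    then show ?thesis by (simp add: Dr_zero)
  qed
  have "Dr (Suc (Suc k)) (\<lambda>e. if e = 1 then 1 else 0) = Dr (Suc k) (\<lambda>e. real e * (if e = 1 then 1 else 0) + (real (Suc k) - real e) * (if e + 1 = 1 then 1 else 0))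
     + real (Suc k) * Dr k (\<lambda>e. if e + 1 = 1 then 1 else 0)"
    using RD[of "Suc k" "\<lambda>e. if e = 1 then 1 else 0"] by simp
  then show ?case using a b step.IH by simp
qed

theorem theorem15:
  fixes n :: nat and x :: real
  assumes "n \<ge> 1" and "x \<noteq> 1"
  shows "(x \<noteq> 0 \<longrightarrow> dB_half n x = derangement_poly (n + 1) x / x + derangement_poly n x)
       \<and> dB_half n x = (\<Sum>p \<in> {p. p permutes {1..n+1} \<and> no_succession (n + 1) p}. x ^ asc (n + 1) p)"
proof -
  have S: "(\<Sum>p \<in> {p. p permutes {1..n+1} \<and> no_succession (n + 1) p}. x ^ asc (n + 1) p) = Sn (Suc n) (\<lambda>a. x ^ a)"
    using target_Sn[where m="n + 1" and x=x] by simp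
  have T: "Sn (Suc n) (\<lambda>a. x ^ a) = Dr (Suc n) (\<lambda>e. x ^ (e - 1)) + Dr n (\<lambda>e. x ^ e)"
    using Tprop[of "Suc n" "\<lambda>a. x ^ a"] by simp
  show ?thesis
  proof (cases "x = 0")
    case True
    have a: "Dr n (\<lambda>e. x ^ e) = 0"
    proof -
      have "Dr n (\<lambda>e. x ^ e) = Dr n (\<lambda>e. 0)" using assms True by (intro Dr_cong1) auto
      then show ?thesis by (simp add: Dr_zero)
    qed
    have b: "Dr (Suc n) (\<lambda>e. x ^ (e - 1)) = 1"
    proof -
      have "Dr (Suc n) (\<lambda>e. x ^ (e - 1)) = Dr (Suc n) (\<lambda>e. if e = 1 then 1 else 0)"
        using True by (intro Dr_cong1) auto
      then show ?thesis using Dr_ind1[OF assms(1)] by simp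
    qed
    show ?thesis using True S T a b by (simp add: dB_zero)
  next
    case False
    have m: "dB_half n x = Dr (Suc n) (\<lambda>e. x ^ e) / x + Dr n (\<lambda>e. x ^ e)"
      using assms(2) False by (rule dB_main)
    have b: "Dr (Suc n) (\<lambda>e. x ^ (e - 1)) = Dr (Suc n) (\<lambda>e. x ^ e) / x"
    proof -
      have "Dr (Suc n) (\<lambda>e. x ^ (e - 1)) = Dr (Suc n) (\<lambda>e. (1 / x) * x ^ e)"
        using False by (intro Dr_cong1) (auto simp: power_diff)
      also have "\<dots> = (1 / x) * Dr (Suc n) (\<lambda>e. x ^ e)" by (rule Dr_mult)
      finally show ?thesis by simp
    qed
    show ?thesis using m S T b by (simp add: dp_Dr)
  qed
qed

end
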